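(* Let $A$ be a unital $C^*$-algebra and let $a,b\in A$ be self-adjoint. Then $a=b$ if and only if $\rho(a,b)=0$.
   Context: For $a,b\in A$ and $n\geq 0$ put $C_{a,b}^n\mathbf 1=\sum_{k=0}^n(-1)^k\binom{n}{k}a^{n-k}b^k$ (with $a^0=b^0=\mathbf 1$), and $\rho(a,b)=\limsup_{n\to\infty}\|C_{a,b}^n\mathbf 1\|^{1/n}$. *)

theory Defs
  imports "HOL-Analysis.Analysis"
begin

text \<open>Unital C*-algebras: a real Banach algebra with unit (norm 1 = 1), equipped with a
  complex scalar multiplication compatible with the real one, and an involution satisfying
  the C*-identity.\<close>

class cstar_algebra_1 = real_normed_algebra_1 + banach +
  fixes cscale :: "complex \<Rightarrow> 'a \<Rightarrow> 'a"
    and adj :: "'a \<Rightarrow> 'a"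
  assumes cscale_of_real: "cscale (of_real r) x = scaleR r x"
    and cscale_add_left: "cscale (c + d) x = cscale c x + cscale d x"
    and cscale_add_right: "cscale c (x + y) = cscale c x + cscale c y"
    and cscale_cscale: "cscale c (cscale d x) = cscale (c * d) x"
    and cscale_mult_left: "cscale c (x * y) = cscale c x * y"
    and cscale_mult_right: "cscale c (x * y) = x * cscale c y"
    and norm_cscale: "norm (cscale c x) = cmod c * norm x"
    and adj_adj: "adj (adj x) = x"
    and adj_add: "adj (x + y) = adj x + adj y"
    and adj_cscale: "adj (cscale c x) = cscale (cnj c) (adj x)"
    and adj_mult: "adj (x * y) = adj y * adj x"
    and cstar_identity: "norm (adj x * x) = (norm x)\<^sup>2"

definition selfadjoint :: "'a::cstar_algebra_1 \<Rightarrow> bool" where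
  "selfadjoint a \<longleftrightarrow> adj a = a"

definition Cpow :: "'a::cstar_algebra_1 \<Rightarrow> 'a \<Rightarrow> nat \<Rightarrow> 'a" where
  "Cpow a b n = (\<Sum>k\<le>n. ((-1) ^ k * of_nat (n choose k)) * a ^ (n - k) * b ^ k)"

definition rho :: "'a::cstar_algebra_1 \<Rightarrow> 'a \<Rightarrow> ereal" where
  "rho a b = limsup (\<lambda>n. ereal (root n (norm (Cpow a b n))))"

end

theory Submission
  imports Defs
begin



lemma cscale_zero_left [simp]: "cscale 0 (x::'a::cstar_algebra_1) = 0"
  using cscale_of_real[of 0 x] by simp
lemma cscale_one [simp]: "cscale 1 (x::'a::cstar_algebra_1) = x"
  using cscale_of_real[of 1 x] by simp
lemma cscale_zero_right [simp]: "cscale c (0::'a::cstar_algebra_1) = 0"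
  using cscale_add_right[of c 0 0] by simp
lemma cscale_minus_left: "cscale (-c) (x::'a::cstar_algebra_1) = - cscale c x"
  using cscale_add_left[of c "-c" x] by (simp add: eq_neg_iff_add_eq_0 add.commute)
lemma cscale_minus_right: "cscale c (- x::'a::cstar_algebra_1) = - cscale c x"
  using cscale_add_right[of c x "-x"] by (simp add: eq_neg_iff_add_eq_0 add.commute)
lemma cscale_diff_right: "cscale c (x - y::'a::cstar_algebra_1) = cscale c x - cscale c y"
  using cscale_add_right[of c x "-y"] by (simp add: cscale_minus_right)
lemma cscale_sum_right: "cscale c (sum f A) = (\<Sum>i\<in>A. cscale c (f i::'a::cstar_algebra_1))"
  by (induction A rule: infinite_finite_induct) (auto simp: cscale_add_right)
lemma cscale_sum_left: "cscale (sum f A) (x::'a::cstar_algebra_1) = (\<Sum>i\<in>A. cscale (f i) x)"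
  by (induction A rule: infinite_finite_induct) (auto simp: cscale_add_left)
lemma cscale_scaleR_right: "cscale c (scaleR r x) = scaleR r (cscale c (x::'a::cstar_algebra_1))"
  by (simp add: cscale_of_real[symmetric] cscale_cscale mult.commute)
lemma cscale_of_real_eq: "cscale (complex_of_real r) (x::'a::cstar_algebra_1) = scaleR r x"
  by (rule cscale_of_real)
lemma bounded_linear_cscale: "bounded_linear (cscale c :: 'a::cstar_algebra_1 \<Rightarrow> 'a)"
proof (rule bounded_linear_intro[where K="cmod c"])
  show "\<And>x y. cscale c (x + y) = cscale c x + cscale c (y::'a)" by (rule cscale_add_right)
  show "\<And>r x. cscale c (r *\<^sub>R x) = r *\<^sub>R cscale c (x::'a)" by (rule cscale_scaleR_right)
  show "\<And>x. norm (cscale c (x::'a)) \<le> norm x * cmod c" by (simp add: norm_cscale)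
qed
lemma cscale_power: "(cscale c (x::'a::cstar_algebra_1)) ^ n = cscale (c ^ n) (x ^ n)"
proof (induction n)
  case 0 then show ?case by simp
next
  case (Suc n)
  have "cscale c x ^ Suc n = cscale c x * cscale (c^n) (x^n)" by (simp add: Suc)
  also have "\<dots> = cscale c (cscale (c^n) (x * x^n))"
    by (metis cscale_mult_left cscale_mult_right)
  finally show ?case by (metis cscale_cscale mult.commute power_Suc)
qed

lemma adj_zero [simp]: "adj (0::'a::cstar_algebra_1) = 0"
  using adj_add[of "0::'a" 0] by simp
lemma adj_one [simp]: "adj (1::'a::cstar_algebra_1) = 1"
proof -
  have "adj (1::'a) = adj 1 * adj (adj 1)" by (simp add: adj_adj)
  also have "\<dots> = adj (adj 1 * 1)" by (rule adj_mult[symmetric])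
  also have "\<dots> = 1" by (simp add: adj_adj)
  finally show ?thesis .
qed
lemma adj_scaleR: "adj (scaleR r (x::'a::cstar_algebra_1)) = scaleR r (adj x)"
  by (metis adj_cscale complex_cnj_complex_of_real cscale_of_real)
lemma adj_minus: "adj (- (x::'a::cstar_algebra_1)) = - adj x"
  using adj_scaleR[of "-1" x] by simp
lemma norm_adj [simp]: "norm (adj (x::'a::cstar_algebra_1)) = norm x"
proof -
  have le: "norm y \<le> norm (adj y)" for y :: 'a
  proof (cases "y = 0")
    case False
    have "(norm y)^2 = norm (adj y * y)" by (simp add: cstar_identity)
    also have "\<dots> \<le> norm (adj y) * norm y" by (rule norm_mult_ineq)
    finally show ?thesis using False by (simp add: power2_eq_square)
  qed simp
  show ?thesis using le[of x] le[of "adj x"] by (simp add: adj_adj)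
qed
lemma bounded_linear_adj: "bounded_linear (adj :: 'a::cstar_algebra_1 \<Rightarrow> 'a)"
  by (rule bounded_linear_intro[where K=1]) (auto simp: adj_add adj_scaleR)
lemma adj_power: "adj ((x::'a::cstar_algebra_1) ^ n) = (adj x) ^ n"
  by (induction n) (auto simp: adj_mult power_commutes)
lemma adj_exp: "adj (exp (x::'a::cstar_algebra_1)) = exp (adj x)"
proof -
  have "(\<lambda>n. adj (x^n /\<^sub>R fact n)) sums adj (exp x)"
    by (rule bounded_linear.sums[OF bounded_linear_adj exp_converges])
  hence "(\<lambda>n. (adj x)^n /\<^sub>R fact n) sums adj (exp x)"
    by (simp add: adj_scaleR adj_power)
  thus ?thesis using exp_converges sums_unique2 by blast
qed

lemma unitary_exp:
  fixes x :: "'a::cstar_algebra_1" assumes "adj x = - x"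
  shows "adj (exp x) * exp x = 1" "exp x * adj (exp x) = 1"
  using exp_minus_inverse[of x] exp_minus_inverse[of "-x"] by (simp_all add: adj_exp assms)

lemma norm_unitary_prod:
  fixes u v :: "'a::cstar_algebra_1" assumes "adj u * u = 1" "adj v * v = 1"
  shows "norm (u * v) = 1"
proof -
  have "adj (u * v) * (u * v) = adj v * (adj u * u) * v" by (simp add: adj_mult mult.assoc)
  also have "\<dots> = 1" using assms by simp
  finally have "(norm (u * v))^2 = 1" using cstar_identity[of "u * v"] by simp
  thus ?thesis using norm_ge_zero[of "u * v"] by (auto simp: power2_eq_1_iff)
qed



lemma scaleR_as_cscale: "scaleR r (x::'a::cstar_algebra_1) = cscale (complex_of_real r) x"
  by (simp add: cscale_of_real)

lemma cscale_mult_both: "cscale p u * cscale q v = cscale (p * q) (u * (v::'a::cstar_algebra_1))"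
  by (metis cscale_mult_left cscale_mult_right cscale_cscale)

lemma Cpow_cscale: "Cpow a b n = (\<Sum>k\<le>n. cscale (complex_of_real ((-1)^k * real (n choose k))) (a^(n-k) * (b::'a::cstar_algebra_1)^k))"
  unfolding Cpow_def
proof (intro sum.cong refl)
  fix k assume "k \<in> {..n}"
  have "cscale (complex_of_real ((-1)^k * real (n choose k))) (a^(n-k) * b^k)
      = of_real ((-1)^k * real (n choose k)) * (a^(n-k) * b^k)"
    by (simp only: cscale_of_real scaleR_conv_of_real)
  also have "\<dots> = ((-1)^k * of_nat (n choose k)) * a^(n-k) * b^k"
    by (simp add: mult.assoc)
  finally show "((-1)^k * of_nat (n choose k)) * a^(n-k) * b^k = cscale (complex_of_real ((-1)^k * real (n choose k))) (a^(n-k) * b^k)" by simp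
qed

lemma scal_identity:
  assumes "i \<le> k"
  shows "c^i * (-c)^(k-i) / (fact i * fact (k-i)) = c^k / fact k * complex_of_real ((-1)^(k-i) * real (k choose (k - i)))"
proof -
  have ch: "real (k choose (k-i)) = fact k / (fact i * fact (k-i))"
    using assms by (simp add: binomial_fact binomial_symmetric[symmetric])
  have "c^i * (-c)^(k-i) = (-1)^(k-i) * (c^i * c^(k-i))"
    by (simp only: power_minus[of c] mult.left_commute)
  also have "c^i * c^(k-i) = c^k" using assms by (simp add: power_add[symmetric])
  finally have "c^i * (-c)^(k-i) = (-1)^(k-i) * c^k" .
  hence "c^i * (-c)^(k-i) / (fact i * fact (k-i)) = (-1)^(k-i) * c^k / (fact i * fact (k-i))" by simp
  also have "\<dots> = c^k / fact k * ((-1)^(k-i) * (fact k / (fact i * fact (k-i))))"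
    by (simp add: field_simps)
  also have "\<dots> = c^k / fact k * complex_of_real ((-1)^(k-i) * real (k choose (k - i)))"
    unfolding ch by simp
  finally show ?thesis .
qed

lemma prod_exp_series:
  fixes a b :: "'a::cstar_algebra_1"
  shows "(\<lambda>n. cscale (c^n / fact n) (Cpow a b n)) sums (exp (cscale c a) * exp (cscale (-c) b))"
proof -
  define X where "X = cscale c a"
  define Y where "Y = cscale (-c) b"
  have "(\<lambda>k. \<Sum>i\<le>k. (X^i /\<^sub>R fact i) * (Y^(k-i) /\<^sub>R fact (k-i))) sums
        ((\<Sum>n. X^n /\<^sub>R fact n) * (\<Sum>n. Y^n /\<^sub>R fact n))"
    by (rule Cauchy_product_sums) (rule summable_norm_exp)+
  moreover have "(\<Sum>n. X^n /\<^sub>R fact n) = exp X" "(\<Sum>n. Y^n /\<^sub>R fact n) = exp Y"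
    using sums_unique[OF exp_converges[of X]] sums_unique[OF exp_converges[of Y]] by simp_all
  ultimately have S: "(\<lambda>k. \<Sum>i\<le>k. (X^i /\<^sub>R fact i) * (Y^(k-i) /\<^sub>R fact (k-i))) sums (exp X * exp Y)"
    by simp
  have T: "(\<Sum>i\<le>k. (X^i /\<^sub>R fact i) * (Y^(k-i) /\<^sub>R fact (k-i))) = cscale (c^k / fact k) (Cpow a b k)" for k
  proof -
    have "(\<Sum>i\<le>k. (X^i /\<^sub>R fact i) * (Y^(k-i) /\<^sub>R fact (k-i)))
        = (\<Sum>i\<le>k. cscale (c^i * (-c)^(k-i) / (fact i * fact (k-i))) (a^i * b^(k-i)))"
    proof (intro sum.cong refl)
      fix i assume "i \<in> {..k}"
      show "(X^i /\<^sub>R fact i) * (Y^(k-i) /\<^sub>R fact (k-i)) = cscale (c^i * (-c)^(k-i) / (fact i * fact (k-i))) (a^i * b^(k-i))"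
        unfolding X_def Y_def cscale_power scaleR_as_cscale cscale_cscale cscale_mult_both
        by (intro arg_cong2[where f=cscale] refl) (simp add: field_simps)
    qed
    also have "\<dots> = (\<Sum>i\<le>k. cscale (c^k / fact k * complex_of_real ((-1)^(k-i) * real (k choose (k - i)))) (a^i * b^(k-i)))"
      by (intro sum.cong refl) (simp add: scal_identity)
    also have "\<dots> = (\<Sum>j\<le>k. cscale (c^k / fact k * complex_of_real ((-1)^j * real (k choose j))) (a^(k-j) * b^j))"
      by (rule sum.reindex_bij_witness[of _ "\<lambda>i. k - i" "\<lambda>i. k - i"]) auto
    also have "\<dots> = cscale (c^k / fact k) (Cpow a b k)"
      unfolding Cpow_cscale cscale_sum_right by (simp add: cscale_cscale)
    finally show ?thesis .
  qed
  show ?thesis unfolding X_def[symmetric] Y_def[symmetric] using S unfolding T .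
qed



definition zeta :: "nat \<Rightarrow> nat \<Rightarrow> complex" where "zeta M k = cis (2*pi*real k / real M)"

lemma cmod_zeta [simp]: "cmod (zeta M k) = 1"
  by (simp add: zeta_def)

lemma zeta_term:
  assumes "M > 0"
  shows "zeta M k ^ a * cnj (zeta M k) ^ b = cis (2*pi*(real a - real b)/real M) ^ k"
proof -
  have "zeta M k ^ a * cnj (zeta M k) ^ b = cis (real a * (2*pi*real k/real M) + real b * (-(2*pi*real k/real M)))"
    by (simp only: zeta_def cis_cnj Complex.DeMoivre cis_mult)
  also have "\<dots> = cis (real k * (2*pi*(real a - real b)/real M))"
    by (rule arg_cong[where f=cis]) (use assms in \<open>simp add: field_simps\<close>)
  also have "\<dots> = cis (2*pi*(real a - real b)/real M) ^ k" by (simp add: Complex.DeMoivre)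
  finally show ?thesis .
qed

lemma root_sum:
  assumes "M > 0" "a < M" "b < M"
  shows "(\<Sum>k<M. zeta M k ^ a * cnj (zeta M k) ^ b) = (if a = b then of_nat M else 0)"
proof (cases "a = b")
  case True
  then show ?thesis using assms by (simp add: zeta_term)
next
  case False
  define q where "q = cis (2*pi*(real a - real b)/real M)"
  have q1: "q \<noteq> 1"
  proof
    assume "q = 1"
    hence "cos (2*pi*(real a - real b)/real M) = 1" unfolding q_def
      by (metis Re_complex_of_real cis.simps(1) complex_of_real_def one_complex.sel(1))
    then obtain n :: int where n: "2*pi*(real a - real b)/real M = real_of_int n * 2 * pi"
      using cos_one_2pi_int by blast
    hence "2*pi*((real a - real b) - n*real M) = 0" using assms(1) by (simp add: field_simps)
    hence d: "real a - real b = n * real M" using pi_gt_zero by simp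
    have "\<bar>real a - real b\<bar> < real M" using assms by auto
    hence "\<bar>n\<bar> < 1" using d assms(1) by (simp add: abs_mult)
    hence "n = 0" by simp
    with d False show False by simp
  qed
  have qM: "q ^ M = 1"
  proof -
    have "q ^ M = cis (real M * (2*pi*(real a - real b)/real M))" unfolding q_def Complex.DeMoivre ..
    also have "\<dots> = cis (2*pi*(of_int (int a - int b)))" using assms(1) by simp
    also have "\<dots> = 1" by (rule cis_multiple_2pi) simp
    finally show ?thesis .
  qed
  have "(\<Sum>k<M. zeta M k ^ a * cnj (zeta M k) ^ b) = (\<Sum>k<M. q ^ k)"
    using assms(1) by (simp add: zeta_term q_def)
  also have "\<dots> = 0" using q1 qM by (simp add: geometric_sum)
  finally show ?thesis using False by simp
qed



lemma cauchy_coeff1: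
  fixes c :: "nat \<Rightarrow> 'a::cstar_algebra_1"
  assumes N: "N \<ge> 1" and r: "r > 0"
    and B: "\<And>\<zeta>. cmod \<zeta> = 1 \<Longrightarrow> norm (\<Sum>n\<le>N. cscale ((complex_of_real r * \<zeta>)^n) (c n)) \<le> B"
  shows "r * norm (c 1) \<le> B"
proof -
  define M where "M = Suc N"
  have M: "M > 0" "1 < M" using N by (auto simp: M_def)
  have "(\<Sum>k<M. cscale (cnj (zeta M k) / of_nat M) (\<Sum>n\<le>N. cscale ((complex_of_real r * zeta M k)^n) (c n)))
      = (\<Sum>n\<le>N. \<Sum>k<M. cscale (cnj (zeta M k) / of_nat M * (complex_of_real r * zeta M k)^n) (c n))"
    by (simp add: cscale_sum_right cscale_cscale sum.swap[of _ "{..<M}"])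
  also have "\<dots> = (\<Sum>n\<le>N. cscale ((complex_of_real r)^n / of_nat M * (\<Sum>k<M. zeta M k ^ n * cnj (zeta M k) ^ 1)) (c n))"
  proof (intro sum.cong refl)
    fix n assume "n \<in> {..N}"
    have "(\<Sum>k<M. cnj (zeta M k) / of_nat M * (complex_of_real r * zeta M k)^n)
        = (complex_of_real r)^n / of_nat M * (\<Sum>k<M. zeta M k ^ n * cnj (zeta M k) ^ 1)"
      by (simp add: sum_distrib_left power_mult_distrib mult_ac)
    thus "(\<Sum>k<M. cscale (cnj (zeta M k) / of_nat M * (complex_of_real r * zeta M k)^n) (c n))
        = cscale ((complex_of_real r)^n / of_nat M * (\<Sum>k<M. zeta M k ^ n * cnj (zeta M k) ^ 1)) (c n)"
      by (simp add: cscale_sum_left[symmetric])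
  qed
  also have "\<dots> = (\<Sum>n\<le>N. if n = 1 then cscale (complex_of_real r) (c 1) else 0)"
  proof (intro sum.cong refl)
    fix n assume "n \<in> {..N}"
    hence nM: "n < M" by (auto simp: M_def)
    have rs: "(\<Sum>k<M. zeta M k ^ n * cnj (zeta M k) ^ 1) = (if n = 1 then of_nat M else 0)"
      using root_sum[OF M(1) nM M(2)] .
    show "cscale ((complex_of_real r)^n / of_nat M * (\<Sum>k<M. zeta M k ^ n * cnj (zeta M k) ^ 1)) (c n)
        = (if n = 1 then cscale (complex_of_real r) (c 1) else 0)"
      unfolding rs using M by simp
  qed
  also have "\<dots> = cscale (complex_of_real r) (c 1)" using N by simp
  finally have eq: "cscale (complex_of_real r) (c 1) = (\<Sum>k<M. cscale (cnj (zeta M k) / of_nat M) (\<Sum>n\<le>N. cscale ((complex_of_real r * zeta M k)^n) (c n)))" by simp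
  have "r * norm (c 1) = norm (cscale (complex_of_real r) (c 1))" using r by (simp add: norm_cscale)
  also have "\<dots> \<le> (\<Sum>k<M. norm (cscale (cnj (zeta M k) / of_nat M) (\<Sum>n\<le>N. cscale ((complex_of_real r * zeta M k)^n) (c n))))"
    unfolding eq by (rule norm_sum)
  also have "\<dots> \<le> (\<Sum>k<M. B / real M)"
  proof (intro sum_mono)
    fix k assume "k \<in> {..<M}"
    have "norm (cscale (cnj (zeta M k) / of_nat M) (\<Sum>n\<le>N. cscale ((complex_of_real r * zeta M k)^n) (c n)))
        = norm (\<Sum>n\<le>N. cscale ((complex_of_real r * zeta M k)^n) (c n)) / real M"
      by (simp add: norm_cscale norm_divide)
    also have "\<dots> \<le> B / real M" using B[of "zeta M k"] M by (simp add: divide_right_mono)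
    finally show "norm (cscale (cnj (zeta M k) / of_nat M) (\<Sum>n\<le>N. cscale ((complex_of_real r * zeta M k)^n) (c n))) \<le> B / real M" .
  qed
  also have "\<dots> = B" using M by simp
  finally show ?thesis .
qed



lemma kernel_id:
  fixes w :: complex
  assumes eD: "e \<le> D" and DL: "D \<le> L" and M: "M = D + L + 1"
  shows "(\<Sum>k<M. zeta M k ^ e * ((\<Sum>i\<le>L. (cnj w * zeta M k)^i) * cnj (\<Sum>i\<le>L. (cnj w * zeta M k)^i)))
         = of_nat M * w^e * (\<Sum>i\<le>L-e. (cnj w * w)^i)"
proof -
  have M0: "M > 0" using M by simp
  have "(\<Sum>k<M. zeta M k ^ e * ((\<Sum>i\<le>L. (cnj w * zeta M k)^i) * cnj (\<Sum>i\<le>L. (cnj w * zeta M k)^i)))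
      = (\<Sum>k<M. \<Sum>i\<le>L. \<Sum>j\<le>L. (cnj w ^ i * w ^ j) * (zeta M k ^ (e + i) * cnj (zeta M k) ^ j))"
  proof (intro sum.cong refl)
    fix k
    show "zeta M k ^ e * ((\<Sum>i\<le>L. (cnj w * zeta M k)^i) * cnj (\<Sum>i\<le>L. (cnj w * zeta M k)^i))
        = (\<Sum>i\<le>L. \<Sum>j\<le>L. (cnj w ^ i * w ^ j) * (zeta M k ^ (e + i) * cnj (zeta M k) ^ j))"
      by (simp add: sum_product sum_distrib_left power_mult_distrib power_add mult_ac)
  qed
  also have "\<dots> = (\<Sum>i\<le>L. \<Sum>j\<le>L. (cnj w ^ i * w ^ j) * (\<Sum>k<M. zeta M k ^ (e + i) * cnj (zeta M k) ^ j))"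
    by (simp add: sum_distrib_left sum.swap[of _ "{..<M}"])
  also have "\<dots> = (\<Sum>i\<le>L. \<Sum>j\<le>L. (cnj w ^ i * w ^ j) * (if e + i = j then of_nat M else 0))"
  proof (intro sum.cong refl)
    fix i j assume "i \<in> {..L}" "j \<in> {..L}"
    hence "e + i < M" "j < M" using eD M by auto
    thus "(cnj w ^ i * w ^ j) * (\<Sum>k<M. zeta M k ^ (e + i) * cnj (zeta M k) ^ j)
        = (cnj w ^ i * w ^ j) * (if e + i = j then of_nat M else 0)"
      using root_sum[OF M0] by simp
  qed
  also have "\<dots> = (\<Sum>i\<le>L. if e + i \<le> L then cnj w ^ i * w ^ (e + i) * of_nat M else 0)"
    by (intro sum.cong refl) (simp add: if_distrib[of "\<lambda>x. _ * x"] sum.delta' cong: if_cong)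
  also have "\<dots> = (\<Sum>i\<in>{i\<in>{..L}. e + i \<le> L}. cnj w ^ i * w ^ (e + i) * of_nat M)"
    by (rule sum.inter_filter[symmetric]) simp
  also have "{i\<in>{..L}. e + i \<le> L} = {..L-e}" using eD DL by auto
  also have "(\<Sum>i\<le>L-e. cnj w ^ i * w ^ (e + i) * of_nat M) = of_nat M * w^e * (\<Sum>i\<le>L-e. (cnj w * w)^i)"
    by (simp add: sum_distrib_left power_mult_distrib power_add mult_ac)
  finally show ?thesis .
qed



lemma cscale_diff_left: "cscale (p - q) (x::'a::cstar_algebra_1) = cscale p x - cscale q x"
  using cscale_add_left[of p "-q" x] by (simp add: cscale_minus_left)

lemma maxp_L:
  fixes v :: "'i \<Rightarrow> 'a::cstar_algebra_1" and e :: "'i \<Rightarrow> nat"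
  assumes I: "finite I" and Sb: "\<And>\<zeta>. cmod \<zeta> = 1 \<Longrightarrow> norm (\<Sum>j\<in>I. cscale (\<zeta> ^ e j) (v j)) \<le> S"
    and w: "cmod w < 1" and DL: "(\<Sum>j\<in>I. e j) \<le> L"
  shows "norm (\<Sum>j\<in>I. cscale (w ^ e j) (v j)) \<le> S + cmod w ^ L * (\<Sum>j\<in>I. norm (v j))"
proof -
  define D where "D = (\<Sum>j\<in>I. e j)"
  have eD: "e j \<le> D" if "j \<in> I" for j unfolding D_def by (rule member_le_sum[OF that _ I]) auto
  define M where "M = D + L + 1"
  have M0: "M > 0" by (simp add: M_def)
  define x where "x = cmod w"
  define q where "q = x^2"
  have x0: "0 \<le> x" "x < 1" using w by (auto simp: x_def)
  have q0: "0 \<le> q" "q < 1" using x0 mult_strict_mono[of x 1 x 1] unfolding q_def by (auto simp: power2_eq_square)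
  define g where "g k = (\<Sum>i\<le>L. (cnj w * zeta M k)^i)" for k
  define K where "K k = (1 - q) * (cmod (g k))^2" for k
  have K0: "K k \<ge> 0" for k using q0 by (simp add: K_def)
  have cw: "cnj w * w = complex_of_real q" unfolding q_def x_def
    using complex_norm_square[of w] by (simp add: mult.commute)
  have ns: "\<And>z. (complex_of_real (cmod z))^2 = z * cnj z" using complex_norm_square by (metis of_real_power)
  have kid: "(\<Sum>k<M. zeta M k ^ f * complex_of_real (K k)) = of_nat M * w^f * (1 - complex_of_real (q^(L-f+1)))"
    if fD: "f \<le> D" for f
  proof -
    have "(\<Sum>k<M. zeta M k ^ f * complex_of_real (K k))
        = complex_of_real (1 - q) * (\<Sum>k<M. zeta M k ^ f * (g k * cnj (g k)))"
      using ns by (simp add: K_def sum_distrib_left mult_ac)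
    also have "\<dots> = complex_of_real (1 - q) * (of_nat M * w^f * (\<Sum>i\<le>L-f. (cnj w * w)^i))"
      unfolding g_def using kernel_id[OF fD _ M_def] DL D_def by simp
    also have "\<dots> = of_nat M * w^f * ((1 - complex_of_real q) * (\<Sum>i\<le>L-f. (complex_of_real q)^i))"
      unfolding cw by (simp add: mult_ac)
    also have "\<dots> = of_nat M * w^f * (1 - complex_of_real (q^(L-f+1)))"
      unfolding sum_gp_basic by simp
    finally show ?thesis .
  qed
  define A where "A = (\<Sum>k<M. cscale (complex_of_real (K k / real M)) (\<Sum>j\<in>I. cscale (zeta M k ^ e j) (v j)))"
  define E where "E = (\<Sum>j\<in>I. cscale (w ^ e j * complex_of_real (q^(L - e j + 1))) (v j))"
  have AE: "(\<Sum>j\<in>I. cscale (w ^ e j) (v j)) = A + E"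
  proof -
    have "A = (\<Sum>j\<in>I. \<Sum>k<M. cscale (complex_of_real (K k / real M) * zeta M k ^ e j) (v j))"
      unfolding A_def by (simp add: cscale_sum_right cscale_cscale sum.swap[of _ "{..<M}"])
    also have "\<dots> = (\<Sum>j\<in>I. cscale (w ^ e j * (1 - complex_of_real (q^(L - e j + 1)))) (v j))"
    proof (intro sum.cong refl)
      fix j assume j: "j \<in> I"
      have "(\<Sum>k<M. complex_of_real (K k / real M) * zeta M k ^ e j)
          = (\<Sum>k<M. zeta M k ^ e j * complex_of_real (K k)) / of_nat M"
        by (simp add: sum_divide_distrib mult_ac)
      also have "\<dots> = w ^ e j * (1 - complex_of_real (q^(L - e j + 1)))"
        unfolding kid[OF eD[OF j]] using M0 by simp
      finally show "(\<Sum>k<M. cscale (complex_of_real (K k / real M) * zeta M k ^ e j) (v j))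
          = cscale (w ^ e j * (1 - complex_of_real (q^(L - e j + 1)))) (v j)"
        by (simp add: cscale_sum_left[symmetric])
    qed
    also have "\<dots> = (\<Sum>j\<in>I. cscale (w ^ e j) (v j)) - E"
      unfolding E_def by (simp only: right_diff_distrib mult_1_right cscale_diff_left sum_subtractf)
    finally show ?thesis by simp
  qed
  have S0: "S \<ge> 0"
  proof -
    have "norm (\<Sum>j\<in>I. cscale (1 ^ e j) (v j)) \<le> S" using Sb[of 1] by simp
    thus ?thesis using norm_ge_zero order_trans by blast
  qed
  have sumK: "(\<Sum>k<M. K k) = real M * (1 - q^(L+1))"
  proof -
    have "complex_of_real (\<Sum>k<M. K k) = (\<Sum>k<M. zeta M k ^ 0 * complex_of_real (K k))" by simp
    also have "\<dots> = complex_of_real (real M * (1 - q^(L+1)))" using kid[of 0] by simp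
    finally show ?thesis using of_real_eq_iff by blast
  qed
  have nA: "norm A \<le> S"
  proof -
    have "norm A \<le> (\<Sum>k<M. norm (cscale (complex_of_real (K k / real M)) (\<Sum>j\<in>I. cscale (zeta M k ^ e j) (v j))))"
      unfolding A_def by (rule norm_sum)
    also have "\<dots> \<le> (\<Sum>k<M. K k / real M * S)"
    proof (intro sum_mono)
      fix k
      have "norm (cscale (complex_of_real (K k / real M)) (\<Sum>j\<in>I. cscale (zeta M k ^ e j) (v j)))
          = K k / real M * norm (\<Sum>j\<in>I. cscale (zeta M k ^ e j) (v j))"
        using K0[of k] by (simp add: norm_cscale norm_divide)
      also have "\<dots> \<le> K k / real M * S" using K0[of k] Sb[of "zeta M k"] by (intro mult_left_mono) auto
      finally show "norm (cscale (complex_of_real (K k / real M)) (\<Sum>j\<in>I. cscale (zeta M k ^ e j) (v j))) \<le> K k / real M * S" .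
    qed
    also have "\<dots> = (\<Sum>k<M. K k) / real M * S"
      by (simp add: sum_distrib_right sum_divide_distrib)
    also have "\<dots> = S * (1 - q^(L+1))"
      unfolding sumK using M0 by simp
    also have "\<dots> \<le> S" using S0 q0 by (simp add: mult_left_le)
    finally show ?thesis .
  qed
  have nE: "norm E \<le> x ^ L * (\<Sum>j\<in>I. norm (v j))"
  proof -
    have "norm E \<le> (\<Sum>j\<in>I. norm (cscale (w ^ e j * complex_of_real (q^(L - e j + 1))) (v j)))"
      unfolding E_def by (rule norm_sum)
    also have "\<dots> \<le> (\<Sum>j\<in>I. x ^ L * norm (v j))"
    proof (intro sum_mono)
      fix j assume j: "j \<in> I"
      have "x ^ e j * q^(L - e j + 1) = x ^ (e j + 2 * (L - e j + 1))"
        unfolding q_def by (simp only: power_mult[symmetric] power_add[symmetric])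
      also have "\<dots> \<le> x ^ L" using x0 eD[OF j] DL D_def by (intro power_decreasing) auto
      finally have le: "x ^ e j * q^(L - e j + 1) \<le> x ^ L" .
      have "norm (cscale (w ^ e j * complex_of_real (q^(L - e j + 1))) (v j))
          = x ^ e j * q^(L - e j + 1) * norm (v j)"
      proof -
        have "cmod (w ^ e j * complex_of_real (q^(L - e j + 1))) = x ^ e j * \<bar>q^(L - e j + 1)\<bar>"
          unfolding norm_mult norm_power norm_of_real x_def ..
        also have "\<bar>q^(L - e j + 1)\<bar> = q^(L - e j + 1)" using q0 by simp
        finally show ?thesis by (simp only: norm_cscale)
      qed
      also have "\<dots> \<le> x ^ L * norm (v j)" using le by (intro mult_right_mono) auto
      finally show "norm (cscale (w ^ e j * complex_of_real (q^(L - e j + 1))) (v j)) \<le> x ^ L * norm (v j)" .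
    qed
    also have "\<dots> = x ^ L * (\<Sum>j\<in>I. norm (v j))" by (simp add: sum_distrib_left)
    finally show ?thesis .
  qed
  show ?thesis unfolding AE using nA nE[unfolded x_def] norm_triangle_ineq[of A E] by linarith
qed



lemma maxp:
  fixes v :: "'i \<Rightarrow> 'a::cstar_algebra_1" and e :: "'i \<Rightarrow> nat"
  assumes I: "finite I" and Sb: "\<And>\<zeta>. cmod \<zeta> = 1 \<Longrightarrow> norm (\<Sum>j\<in>I. cscale (\<zeta> ^ e j) (v j)) \<le> S"
    and w: "cmod w \<le> 1"
  shows "norm (\<Sum>j\<in>I. cscale (w ^ e j) (v j)) \<le> S"
proof (cases "cmod w = 1")
  case True then show ?thesis using Sb by blast
next
  case False
  hence w1: "cmod w < 1" using w by simp
  define C where "C = (\<Sum>j\<in>I. norm (v j))"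
  have lim: "(\<lambda>L. S + cmod w ^ L * C) \<longlonglongrightarrow> S + 0 * C"
    by (intro tendsto_add tendsto_const tendsto_mult LIMSEQ_power_zero) (use w1 in simp)
  have ev: "eventually (\<lambda>L. norm (\<Sum>j\<in>I. cscale (w ^ e j) (v j)) \<le> S + cmod w ^ L * C) sequentially"
    using eventually_ge_at_top[of "\<Sum>j\<in>I. e j"]
  proof eventually_elim
    case (elim L) show ?case unfolding C_def using maxp_L[OF I Sb w1 elim] by simp
  qed
  show ?thesis using tendsto_le[OF trivial_limit_sequentially lim tendsto_const ev] by simp
qed



lemma joukowski:
  fixes u :: complex
  shows "\<exists>w. w \<noteq> 0 \<and> cmod w \<le> 1 \<and> w + inverse w = 2 * u \<and> 1 - cmod w \<le> 2 * cmod u"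
proof -
  define s where "s = csqrt (u^2 - 1)"
  define w1 where "w1 = u + s"
  define w2 where "w2 = u - s"
  have prod: "w1 * w2 = 1" unfolding w1_def w2_def s_def
    by (simp add: algebra_simps power2_eq_square[symmetric])
  hence nz: "w1 \<noteq> 0" "w2 \<noteq> 0" by auto
  have inv1: "inverse w1 = w2" "inverse w2 = w1" using prod by (auto simp: inverse_unique mult.commute)
  have sum: "w1 + w2 = 2 * u" unfolding w1_def w2_def by simp
  have "cmod w1 * cmod w2 = 1" using prod by (metis norm_mult norm_one)
  then obtain w where w: "w \<noteq> 0" "cmod w \<le> 1" "w + inverse w = 2 * u"
  proof (cases "cmod w1 \<le> 1")
    case True then show ?thesis using that[of w1] nz inv1 sum by auto
  next
    case False
    hence "cmod w2 \<le> 1" using \<open>cmod w1 * cmod w2 = 1\<close>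
      by (metis less_eq_real_def linorder_not_le mult_le_cancel_left1 norm_ge_zero)
    then show ?thesis using that[of w2] nz inv1 sum by (auto simp: add.commute)
  qed
  have pos: "cmod w > 0" using w by simp
  have "cmod (inverse w) - cmod w \<le> cmod (w + inverse w)"
    by (metis add.commute norm_diff_ineq)
  hence "1 / cmod w - cmod w \<le> 2 * cmod u" using w by (simp add: norm_inverse norm_mult divide_inverse)
  moreover have "1 \<le> 1 / cmod w" using pos w by simp
  ultimately have "1 - cmod w \<le> 2 * cmod u" by linarith
  thus ?thesis using w by (intro exI[of _ w]) auto
qed

lemma pow_cancel:
  fixes w :: complex
  assumes "w \<noteq> 0" "n \<le> N" "j \<le> n"
  shows "w^N * (w^j * inverse w ^ (n-j)) = w^(N - n + 2*j)"
proof -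
  have e1: "N = (N-n+j) + (n-j)" "N - n + 2*j = (N-n+j) + j" using assms by arith+
  have "w^N = w^(N-n+j) * w^(n-j)" by (subst e1(1)) (rule power_add)
  moreover have "w^(N - n + 2*j) = w^(N-n+j) * w^j" by (subst e1(2)) (rule power_add)
  ultimately show ?thesis using assms by (simp add: power_inverse[symmetric] field_simps)
qed

lemma jouk_expand:
  fixes c :: "nat \<Rightarrow> 'a::cstar_algebra_1" and w :: complex
  assumes w: "w \<noteq> 0"
  shows "cscale (w^N) (\<Sum>n\<le>N. cscale ((complex_of_real R * (w + inverse w) / 2)^n) (c n))
       = (\<Sum>(n,j)\<in>Sigma {..N} (\<lambda>n. {..n}). cscale (w ^ (N - n + 2 * j)) (cscale (complex_of_real ((R/2)^n * real (n choose j))) (c n)))"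
proof -
  have "(\<Sum>(n,j)\<in>Sigma {..N} (\<lambda>n. {..n}). cscale (w ^ (N - n + 2 * j)) (cscale (complex_of_real ((R/2)^n * real (n choose j))) (c n)))
      = (\<Sum>n\<le>N. \<Sum>j\<le>n. cscale (w ^ (N - n + 2 * j) * complex_of_real ((R/2)^n * real (n choose j))) (c n))"
    by (subst sum.Sigma[symmetric]) (auto simp: cscale_cscale)
  also have "\<dots> = (\<Sum>n\<le>N. cscale (w^N * (complex_of_real R * (w + inverse w) / 2)^n) (c n))"
  proof (intro sum.cong refl)
    fix n assume n: "n \<in> {..N}"
    have "w^N * (complex_of_real R * (w + inverse w) / 2)^n
        = (\<Sum>j\<le>n. w ^ (N - n + 2 * j) * complex_of_real ((R/2)^n * real (n choose j)))"
    proof -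
      have "w^N * (complex_of_real R * (w + inverse w) / 2)^n
          = (complex_of_real (R/2))^n * (\<Sum>j\<le>n. of_nat (n choose j) * (w^N * (w^j * inverse w ^ (n-j))))"
        by (simp add: binomial_ring power_mult_distrib power_divide sum_distrib_left sum_divide_distrib mult_ac)
      also have "\<dots> = (\<Sum>j\<le>n. w ^ (N - n + 2 * j) * complex_of_real ((R/2)^n * real (n choose j)))"
        unfolding sum_distrib_left
      proof (intro sum.cong refl)
        fix j assume j: "j \<in> {..n}"
        have pc: "w^N * (w^j * inverse w ^ (n-j)) = w^(N - n + 2*j)"
          using n j w by (intro pow_cancel) auto
        show "(complex_of_real (R/2))^n * (of_nat (n choose j) * (w^N * (w^j * inverse w ^ (n-j))))
            = w ^ (N - n + 2 * j) * complex_of_real ((R/2)^n * real (n choose j))"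
          unfolding pc by (simp add: mult_ac)
      qed
      finally show ?thesis .
    qed
    thus "(\<Sum>j\<le>n. cscale (w ^ (N - n + 2 * j) * complex_of_real ((R/2)^n * real (n choose j))) (c n))
        = cscale (w^N * (complex_of_real R * (w + inverse w) / 2)^n) (c n)"
      by (simp add: cscale_sum_left[symmetric])
  qed
  also have "\<dots> = cscale (w^N) (\<Sum>n\<le>N. cscale ((complex_of_real R * (w + inverse w) / 2)^n) (c n))"
    by (simp add: cscale_sum_right cscale_cscale)
  finally show ?thesis by simp
qed



lemma bernstein:
  fixes c :: "nat \<Rightarrow> 'a::cstar_algebra_1"
  assumes N: "N \<ge> 1" and R: "R > 0"
    and S: "\<And>t. \<bar>t\<bar> \<le> R \<Longrightarrow> norm (\<Sum>n\<le>N. cscale ((complex_of_real t)^n) (c n)) \<le> S"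
  shows "norm (c 1) \<le> 8 * real N * S / R"
proof -
  define P where "P z = (\<Sum>n\<le>N. cscale (z^n) (c n))" for z
  have S0: "S \<ge> 0"
  proof -
    have "norm (\<Sum>n\<le>N. cscale ((complex_of_real 0)^n) (c n)) \<le> S" using R by (intro S) simp
    thus ?thesis using norm_ge_zero order_trans by blast
  qed
  define I where "I = Sigma {..N} (\<lambda>n. {..n})"
  define e where "e = (\<lambda>(n,j). N - n + 2 * j)"
  define v where "v = (\<lambda>(n,j). cscale (complex_of_real ((R/2)^n * real (n choose j))) (c n))"
  have fI: "finite I" unfolding I_def by auto
  have Qeq: "cscale (w^N) (P (complex_of_real R * (w + inverse w) / 2)) = (\<Sum>p\<in>I. cscale (w ^ e p) (v p))"
    if "w \<noteq> 0" for w
    unfolding P_def I_def jouk_expand[OF that]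
    by (intro sum.cong refl) (auto simp: e_def v_def)
  have circ: "norm (\<Sum>p\<in>I. cscale (\<eta> ^ e p) (v p)) \<le> S" if eta: "cmod \<eta> = 1" for \<eta>
  proof -
    have nz: "\<eta> \<noteq> 0" using eta by auto
    have "inverse \<eta> = cnj \<eta>" using divide_conv_cnj[OF eta, of 1] by (simp add: divide_inverse)
    hence eqR: "complex_of_real R * (\<eta> + inverse \<eta>) / 2 = complex_of_real (R * Re \<eta>)"
      by (simp add: complex_add_cnj)
    have "(\<Sum>p\<in>I. cscale (\<eta> ^ e p) (v p)) = cscale (\<eta>^N) (P (complex_of_real (R * Re \<eta>)))"
      using Qeq[OF nz] unfolding eqR by simp
    hence "norm (\<Sum>p\<in>I. cscale (\<eta> ^ e p) (v p)) = norm (P (complex_of_real (R * Re \<eta>)))"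
      using eta by (simp add: norm_cscale norm_power)
    also have "\<dots> \<le> S" unfolding P_def
    proof (rule S)
      have "\<bar>Re \<eta>\<bar> \<le> 1" using abs_Re_le_cmod[of \<eta>] eta by simp
      thus "\<bar>R * Re \<eta>\<bar> \<le> R" using R by (simp add: abs_mult mult_le_cancel_left1)
    qed
    finally show ?thesis .
  qed
  define r where "r = R / (4 * real N)"
  have r0: "r > 0" using R N by (simp add: r_def)
  have B: "norm (\<Sum>n\<le>N. cscale ((complex_of_real r * \<zeta>)^n) (c n)) \<le> 2 * S" if zeta: "cmod \<zeta> = 1" for \<zeta>
  proof -
    define z where "z = complex_of_real r * \<zeta>"
    obtain w where w: "w \<noteq> 0" "cmod w \<le> 1" "w + inverse w = 2 * (z / complex_of_real R)"
      "1 - cmod w \<le> 2 * cmod (z / complex_of_real R)"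
      using joukowski by blast
    have Rne: "complex_of_real R \<noteq> 0" using R by simp
    have zw: "z = complex_of_real R * (w + inverse w) / 2" unfolding w(3) using Rne by simp
    have cz: "cmod z = r" using zeta r0 by (simp add: z_def norm_mult)
    have "2 * cmod (z / complex_of_real R) = 2 * (r / R)" using R by (simp add: norm_divide cz)
    also have "\<dots> = 1 / (2 * real N)" unfolding r_def using R N by (simp add: field_simps)
    finally have "2 * cmod (z / complex_of_real R) = 1 / (2 * real N)" .
    hence w1: "1 - 1 / (2 * real N) \<le> cmod w" using w(4) by linarith
    have "1 / 2 \<le> 1 + real N * (- (1 / (2 * real N)))" using N by simp
    also have "\<dots> \<le> (1 + (- (1 / (2 * real N)))) ^ N"
      by (rule Bernoulli_inequality) (use N in \<open>simp add: field_simps\<close>)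
    also have "\<dots> \<le> cmod w ^ N"
      by (rule power_mono) (use w1 N in \<open>auto simp: field_simps\<close>)
    finally have wN: "1/2 \<le> cmod w ^ N" .
    have Qb: "norm (cscale (w^N) (P z)) \<le> S"
      unfolding zw Qeq[OF w(1)] by (rule maxp[OF fI circ w(2)])
    have "norm (cscale (w^N) (P z)) = cmod w ^ N * norm (P z)" by (simp add: norm_cscale norm_power)
    hence "cmod w ^ N * norm (P z) \<le> S" using Qb by simp
    hence "1/2 * norm (P z) \<le> S" using wN by (meson mult_right_mono norm_ge_zero order_trans)
    thus ?thesis unfolding P_def z_def by simp
  qed
  have "r * norm (c 1) \<le> 2 * S" by (rule cauchy_coeff1[OF N r0 B])
  hence "norm (c 1) \<le> 2 * S / r" using r0 by (simp add: pos_le_divide_eq mult.commute)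
  also have "\<dots> = 8 * real N * S / R" using R N by (simp add: r_def field_simps)
  finally show ?thesis .
qed



lemma pow_le_fact: "real n ^ n \<le> 3 ^ n * fact n"
proof (induction n)
  case 0 then show ?case by simp
next
  case (Suc n)
  have key: "real (Suc n) ^ n \<le> 3 * real n ^ n"
  proof (cases "n = 0")
    case True then show ?thesis by simp
  next
    case False
    hence n0: "real n > 0" by simp
    have "(1 + 1 / real n) ^ n \<le> exp (1 / real n) ^ n"
      by (rule power_mono) (use n0 in auto)
    also have "\<dots> = exp 1" using n0 by (simp add: exp_of_nat_mult[symmetric])
    also have "\<dots> \<le> 3" by (rule exp_le)
    finally have h: "(1 + 1 / real n) ^ n \<le> 3" .
    have "real (Suc n) = real n * (1 + 1 / real n)" using n0 by (simp add: field_simps)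
    hence "real (Suc n) ^ n = real n ^ n * (1 + 1 / real n) ^ n" by (simp add: power_mult_distrib)
    also have "\<dots> \<le> real n ^ n * 3" using h by (intro mult_left_mono) auto
    finally show ?thesis by simp
  qed
  have "real (Suc n) ^ Suc n = real (Suc n) * real (Suc n) ^ n" by simp
  also have "\<dots> \<le> real (Suc n) * (3 * real n ^ n)" using key by (intro mult_left_mono) auto
  also have "\<dots> \<le> real (Suc n) * (3 * (3 ^ n * fact n))" using Suc.IH by (intro mult_left_mono) auto
  also have "\<dots> = 3 ^ Suc n * fact (Suc n)" by (simp add: mult_ac)
  finally show ?case .
qed

lemma Cpow_same: "n \<ge> 1 \<Longrightarrow> Cpow a a n = (0::'a::cstar_algebra_1)"
proof -
  assume n: "n \<ge> 1"
  have "Cpow a a n = (\<Sum>k\<le>n. ((-1)^k * of_nat (n choose k)) * a^n)"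
    unfolding Cpow_def by (intro sum.cong refl) (auto simp: mult.assoc power_add[symmetric])
  also have "\<dots> = (\<Sum>k\<le>n. (-1)^k * of_nat (n choose k)) * a^n" by (simp add: sum_distrib_right)
  also have "(\<Sum>k\<le>n. (-1::'a)^k * of_nat (n choose k)) = of_real (\<Sum>k\<le>n. (-1)^k * real (n choose k))"
    by simp
  also have "(\<Sum>k\<le>n. (-1)^k * real (n choose k)) = 0" using n by (intro choose_alternating_sum) simp
  finally show ?thesis by simp
qed

lemma Cpow_one: "Cpow a b 1 = a - (b::'a::cstar_algebra_1)"
  unfolding Cpow_def by simp



lemma tail_bound:
  fixes x :: "nat \<Rightarrow> 'a::cstar_algebra_1"
  assumes eps: "0 < \<epsilon>" and nN: "n \<ge> N" and t: "\<bar>t\<bar> \<le> real N / (4 * \<epsilon>)"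
    and xb: "norm (x n) \<le> \<epsilon> ^ n"
  shows "norm (cscale ((\<i> * complex_of_real t)^n / fact n) (x n)) \<le> (3/4) ^ n"
proof -
  have "norm (cscale ((\<i> * complex_of_real t)^n / fact n) (x n)) = \<bar>t\<bar>^n * norm (x n) / fact n"
    by (simp add: norm_cscale norm_mult norm_power norm_divide)
  also have "\<dots> \<le> (real N / (4 * \<epsilon>))^n * \<epsilon>^n / fact n"
    using t xb by (intro divide_right_mono mult_mono power_mono) auto
  also have "(real N / (4 * \<epsilon>))^n * \<epsilon>^n = (real N / 4)^n"
  proof -
    have "real N / (4 * \<epsilon>) * \<epsilon> = real N / 4" using eps by simp
    thus ?thesis by (metis power_mult_distrib)
  qed
  also have "(real N / 4)^n \<le> (real n / 4)^n" using nN by (intro power_mono) auto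
  also have "(real n / 4)^n = real n ^ n / 4 ^ n" by (simp add: power_divide)
  also have "real n ^ n / 4 ^ n / fact n \<le> 3 ^ n * fact n / 4 ^ n / fact n"
    using pow_le_fact[of n] by (intro divide_right_mono) auto
  also have "\<dots> = (3/4)^n" by (simp add: power_divide)
  finally show ?thesis by (simp add: divide_right_mono)
qed

theorem corollary3p1:
  fixes a b :: "'a::cstar_algebra_1"
  assumes "selfadjoint a" and "selfadjoint b"
  shows "a = b \<longleftrightarrow> rho a b = 0"
proof
  assume ab: "a = b"
  have "(\<lambda>n. ereal (root n (norm (Cpow a b n)))) = (\<lambda>n. 0)"
  proof
    fix n show "ereal (root n (norm (Cpow a b n))) = 0"
      using ab by (cases "n = 0") (auto simp: Cpow_same)
  qed
  thus "rho a b = 0" unfolding rho_def by (simp add: Limsup_const)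
next
  assume rho: "rho a b = 0"
  have sa: "adj a = a" "adj b = b" using assms by (auto simp: selfadjoint_def)
  have small: "norm (a - b) \<le> 160 * \<epsilon>" if eps: "0 < \<epsilon>" for \<epsilon>
  proof -
    have "eventually (\<lambda>n. ereal (root n (norm (Cpow a b n))) < ereal \<epsilon>) sequentially"
    proof (rule Limsup_lessD)
      show "Limsup sequentially (\<lambda>n. ereal (root n (norm (Cpow a b n)))) < ereal \<epsilon>"
        using rho eps unfolding rho_def by simp
    qed
    then obtain n0 where n0: "\<And>n. n \<ge> n0 \<Longrightarrow> root n (norm (Cpow a b n)) < \<epsilon>"
      by (auto simp: eventually_sequentially)
    define N where "N = max n0 1"
    have N1: "N \<ge> 1" by (simp add: N_def)
    have xb: "norm (Cpow a b n) \<le> \<epsilon> ^ n" if "n \<ge> N" for n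
    proof -
      have n: "n > 0" "n \<ge> n0" using that N1 by (auto simp: N_def)
      have "norm (Cpow a b n) = root n (norm (Cpow a b n)) ^ n" using n by simp
      also have "\<dots> \<le> \<epsilon> ^ n" using n0[OF n(2)] by (intro power_mono) (auto simp: real_root_ge_zero)
      finally show ?thesis .
    qed
    define R where "R = real N / (4 * \<epsilon>)"
    have R0: "R > 0" using N1 eps by (simp add: R_def)
    define c where "c n = cscale (\<i>^n / fact n) (Cpow a b n)" for n
    have Pb: "norm (\<Sum>n\<le>N. cscale ((complex_of_real t)^n) (c n)) \<le> 5" if t: "\<bar>t\<bar> \<le> R" for t
    proof -
      define T where "T n = cscale ((\<i> * complex_of_real t)^n / fact n) (Cpow a b n)" for n
      have Teq: "cscale ((complex_of_real t)^n) (c n) = T n" for n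
        unfolding c_def T_def cscale_cscale by (simp add: power_mult_distrib mult.commute)
      define X where "X = cscale (\<i> * complex_of_real t) a"
      define Y where "Y = cscale (-(\<i> * complex_of_real t)) b"
      define f where "f = exp X * exp Y"
      have Ts: "T sums f" unfolding T_def f_def X_def Y_def by (rule prod_exp_series)
      have cn: "cnj (\<i> * complex_of_real t) = -(\<i> * complex_of_real t)" by simp
      have aX: "adj X = - X" unfolding X_def adj_cscale sa cn cscale_minus_left ..
      have cn2: "cnj (-(\<i> * complex_of_real t)) = \<i> * complex_of_real t" by simp
      have aY: "adj Y = - Y" unfolding Y_def cscale_minus_left adj_minus adj_cscale sa cn cscale_minus_left by simp
      have nf: "norm f = 1" unfolding f_def
        by (rule norm_unitary_prod) (rule unitary_exp(1), fact)+
      have tail: "(\<lambda>i. T (i + Suc N)) sums (f - (\<Sum>i<Suc N. T i))"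
        unfolding sums_iff_shift[of T "Suc N"] using Ts by (simp only: diff_add_cancel)
      have tb: "norm (T (i + Suc N)) \<le> (3/4) ^ i" for i
      proof -
        have "norm (T (i + Suc N)) \<le> (3/4) ^ (i + Suc N)"
          unfolding T_def by (rule tail_bound[of \<epsilon> N "i + Suc N" t "Cpow a b", OF eps _ t[unfolded R_def] xb]) auto
        also have "\<dots> \<le> (3/4) ^ i" by (rule power_decreasing) auto
        finally show ?thesis .
      qed
      have fe: "f - (\<Sum>i<Suc N. T i) = (\<Sum>i. T (i + Suc N))" by (rule sums_unique[OF tail])
      have "norm (f - (\<Sum>i<Suc N. T i)) \<le> (\<Sum>i. (3/4::real) ^ i)"
        unfolding fe by (rule norm_suminf_le[OF tb]) (rule summable_geometric, simp)
      also have "\<dots> = 4" by (simp add: suminf_geometric)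
      finally have nt: "norm (f - (\<Sum>i<Suc N. T i)) \<le> 4" .
      have eqP: "(\<Sum>n\<le>N. cscale ((complex_of_real t)^n) (c n)) = (\<Sum>i<Suc N. T i)"
        unfolding lessThan_Suc_atMost by (rule sum.cong[OF refl Teq])
      have "norm (\<Sum>i<Suc N. T i) \<le> norm f + norm ((\<Sum>i<Suc N. T i) - f)" by (rule norm_triangle_sub)
      hence "norm (\<Sum>i<Suc N. T i) \<le> norm f + norm (f - (\<Sum>i<Suc N. T i))" by (simp add: norm_minus_commute)
      thus ?thesis unfolding eqP using nf nt by linarith
    qed
    have "norm (c 1) \<le> 8 * real N * 5 / R" by (rule bernstein[OF N1 R0 Pb])
    also have "\<dots> = 160 * \<epsilon>"
    proof -
      have Np: "real N > 0" using N1 by simp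
      have "8 * real N * 5 / R = 40 * real N * (4 * \<epsilon>) / real N" unfolding R_def by simp
      also have "\<dots> = 160 * \<epsilon>" using Np by simp
      finally show ?thesis .
    qed
    finally show ?thesis using Cpow_one[of a b] by (simp add: c_def norm_cscale)
  qed
  show "a = b"
  proof (rule ccontr)
    assume "a \<noteq> b"
    hence d: "norm (a - b) > 0" by simp
    have "norm (a - b) \<le> 160 * (norm (a - b) / 320)" by (rule small) (use d in simp)
    thus False using d by simp
  qed
qed


end
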